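(* IPR with $\rho=4$ terminates after at most $O(m^2)$ iterations of its while loop, where $m$ is the number of machines.
   Context: Jobs $j\in[n]$ have processing times $p_j\ge0$; for a bag $B$, $p(B)=\sum_{j\in B}p_j$. There are $m$ machines with predicted speeds $\hat s_1\ge\dots\ge\hat s_m$; $opt(\mathbf p,\hat{\mathbf s})$ is the minimum makespan $\max_i(\text{load of } i)/\hat s_i$ of assigning jobs to machines with speeds $\hat{\mathbf s}$. Algorithm IPR. Input: $\hat{\mathbf s}$, $\mathbf p$, $\alpha\in(0,1)$, accuracy $\epsilon\in(0,1)$, $\rho\ge1$. (1) Compute a partition $B_1,\dots,B_m$ with $p(B_1)\ge\dots\ge p(B_m)$ such that putting $B_i$ on machine $i$ has makespan at most $(1+\epsilon)opt(\mathbf p,\hat{\mathbf s})$ under speeds $\hat{\mathbf s}$. (2) Set $\overline{OPT}_C=\max_i p(B_i)/\hat s_i$ and tentative assignment $\mathcal M_i=\{B_i\}$. (3) While $\max\{p(B): B\in\cup_i\mathcal M_i, |B|\ge2\}>\rho\min\{p(B):B\in\cup_i\mathcal M_i\}$ (each execution of the loop body is an iteration): compute $\mathcal M'=$ LPT-Rebalance$(\mathcal M)$; if $\max_i\sum_{B\in\mathcal M'_i}p(B)/\hat s_i>(1+\alpha)\overline{OPT}_C$ return the current bags $\cup_i\mathcal M_i$; else $\mathcal M\leftarrow\mathcal M'$. (4) Return the bags $\cup_i\mathcal M_i$. LPT-Rebalance: let $B_{\min}$ be a bag of minimum $p(B)$ over all bags, $\mathcal M_{\min}$ its collection, $\mathcal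 M_{\max}$ a collection containing a bag of maximum $p(B)$ among bags with at least two jobs. Move $B_{\min}$ into $\mathcal M_{\max}$, let $\ell=|\mathcal M_{\max}|$, pool its jobs and redistribute them into $\ell$ new bags by LPT (jobs in non-increasing processing time, each into a currently least-loaded bag); these form the new $\mathcal M_{\max}$. *)

theory Defs
  imports Complex_Main "HOL-Library.FuncSet"
begin

(* Jobs are 0..<n with processing times p j; machines are 0..<m with predicted speeds s i.
   A bag is a finite set of jobs; a tentative assignment M maps machine i to the
   list (collection) of bags M i. *)

definition pb :: "(nat \<Rightarrow> real) \<Rightarrow> nat set \<Rightarrow> real" where
  "pb p B = (\<Sum>j\<in>B. p j)"

definition opt :: "nat \<Rightarrow> (nat \<Rightarrow> real) \<Rightarrow> nat \<Rightarrow> (nat \<Rightarrow> real) \<Rightarrow> real" where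
  "opt n p m s = Min ((\<lambda>f. Max ((\<lambda>i. (\<Sum>j\<in>{j\<in>{..<n}. f j = i}. p j) / s i) ` {..<m}))
                        ` ({..<n} \<rightarrow>\<^sub>E {..<m}))"

definition ipr_partition ::
  "nat \<Rightarrow> (nat \<Rightarrow> real) \<Rightarrow> nat \<Rightarrow> (nat \<Rightarrow> real) \<Rightarrow> real \<Rightarrow> (nat \<Rightarrow> nat set) \<Rightarrow> bool" where
  "ipr_partition n p m s eps B \<longleftrightarrow>
     (\<forall>i<m. \<forall>i'<m. i \<noteq> i' \<longrightarrow> B i \<inter> B i' = {}) \<and>
     (\<Union>i<m. B i) = {..<n} \<and>
     (\<forall>i i'. i \<le> i' \<and> i' < m \<longrightarrow> pb p (B i') \<le> pb p (B i)) \<and>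
     Max ((\<lambda>i. pb p (B i) / s i) ` {..<m}) \<le> (1 + eps) * opt n p m s"

definition opt_C :: "(nat \<Rightarrow> real) \<Rightarrow> nat \<Rightarrow> (nat \<Rightarrow> real) \<Rightarrow> (nat \<Rightarrow> nat set) \<Rightarrow> real" where
  "opt_C p m s B = Max ((\<lambda>i. pb p (B i) / s i) ` {..<m})"

definition all_bags :: "nat \<Rightarrow> (nat \<Rightarrow> nat set list) \<Rightarrow> nat set list" where
  "all_bags m M = concat (map M [0..<m])"

definition loop_cond :: "real \<Rightarrow> (nat \<Rightarrow> real) \<Rightarrow> nat \<Rightarrow> (nat \<Rightarrow> nat set list) \<Rightarrow> bool" where
  "loop_cond rho p m M \<longleftrightarrow>
     (\<exists>B\<in>set (all_bags m M). 2 \<le> card B \<and> pb p B > rho * Min (pb p ` set (all_bags m M)))"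

definition makespan :: "(nat \<Rightarrow> real) \<Rightarrow> (nat \<Rightarrow> real) \<Rightarrow> nat \<Rightarrow> (nat \<Rightarrow> nat set list) \<Rightarrow> real" where
  "makespan p s m M = Max ((\<lambda>i. sum_list (map (pb p) (M i)) / s i) ` {..<m})"

inductive lpt_assign :: "(nat \<Rightarrow> real) \<Rightarrow> nat list \<Rightarrow> nat set list \<Rightarrow> nat set list \<Rightarrow> bool"
  for p where
  Nil: "lpt_assign p [] bs bs"
| Cons: "k < length bs \<Longrightarrow> (\<forall>k'<length bs. pb p (bs ! k) \<le> pb p (bs ! k')) \<Longrightarrow>
         lpt_assign p js (bs[k := insert j (bs ! k)]) res \<Longrightarrow> lpt_assign p (j # js) bs res"

definition lpt :: "(nat \<Rightarrow> real) \<Rightarrow> nat set \<Rightarrow> nat \<Rightarrow> nat set list \<Rightarrow> bool" where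
  "lpt p J l res \<longleftrightarrow> (\<exists>js. distinct js \<and> set js = J \<and> sorted_wrt (\<lambda>a b. p b \<le> p a) js \<and>
                          lpt_assign p js (replicate l {}) res)"

(* LPT-Rebalance (relation: M' is a possible outcome on M, allowing all tie-breaks) *)
definition lpt_rebalance :: "(nat \<Rightarrow> real) \<Rightarrow> nat \<Rightarrow> (nat \<Rightarrow> nat set list) \<Rightarrow> (nat \<Rightarrow> nat set list) \<Rightarrow> bool" where
  "lpt_rebalance p m M M' \<longleftrightarrow>
    (\<exists>imin a imax res.
       imin < m \<and> a < length (M imin) \<and>
       (\<forall>B\<in>set (all_bags m M). pb p (M imin ! a) \<le> pb p B) \<and>
       imax < m \<and>
       (\<exists>Bx\<in>set (M imax). 2 \<le> card Bx \<and>
           (\<forall>B\<in>set (all_bags m M). 2 \<le> card B \<longrightarrow> pb p B \<le> pb p Bx)) \<and>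
       (let M1 = M(imin := take a (M imin) @ drop (Suc a) (M imin));
            C = M1 imax @ [M imin ! a]
        in lpt p (\<Union> (set C)) (length C) res \<and> M' = M1(imax := res)))"

definition ipr_runs_iterations ::
  "real \<Rightarrow> real \<Rightarrow> (nat \<Rightarrow> real) \<Rightarrow> (nat \<Rightarrow> real) \<Rightarrow> nat \<Rightarrow> (nat \<Rightarrow> nat set) \<Rightarrow> nat \<Rightarrow> bool" where
  "ipr_runs_iterations rho alpha p s m B k \<longleftrightarrow>
    (\<exists>M :: nat \<Rightarrow> nat \<Rightarrow> nat set list.
       M 0 = (\<lambda>i. [B i]) \<and>
       (\<forall>t<k. loop_cond rho p m (M t) \<and> lpt_rebalance p m (M t) (M (Suc t))) \<and>
       (\<forall>t. Suc t < k \<longrightarrow> makespan p s m (M (Suc t)) \<le> (1 + alpha) * opt_C p m s B))"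

end

theory Submission
  imports Defs "HOL-Library.Multiset"
begin

definition djm :: "nat set multiset \<Rightarrow> bool" where
  "djm A \<longleftrightarrow> (\<forall>X\<in>#A. \<forall>Y\<in>#A - {#X#}. X \<inter> Y = {})"

lemma djm_empty[simp]: "djm {#}" by (simp add: djm_def)

lemma djm_add: "djm (add_mset X A) \<longleftrightarrow> djm A \<and> (\<forall>Y\<in>#A. X \<inter> Y = {})"
proof
  assume h: "djm (add_mset X A)"
  have 1: "\<forall>Y\<in>#A. X \<inter> Y = {}" using h unfolding djm_def by auto
  have "djm A" unfolding djm_def
  proof (intro ballI)
    fix Z Y assume Z: "Z \<in># A" and Y: "Y \<in># A - {#Z#}"
    have "Z \<in># add_mset X A" using Z by simp
    moreover have "Y \<in># add_mset X A - {#Z#}"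
      using Y by (auto simp: in_diff_count)
    ultimately show "Z \<inter> Y = {}" using h unfolding djm_def by blast
  qed
  then show "djm A \<and> (\<forall>Y\<in>#A. X \<inter> Y = {})" using 1 by blast
next
  assume h: "djm A \<and> (\<forall>Y\<in>#A. X \<inter> Y = {})"
  show "djm (add_mset X A)" unfolding djm_def
  proof (intro ballI)
    fix Z Y assume Z: "Z \<in># add_mset X A" and Y: "Y \<in># add_mset X A - {#Z#}"
    show "Z \<inter> Y = {}"
    proof (cases "Z = X")
      case True
      then show ?thesis using Y h by auto
    next
      case False
      then have ZA: "Z \<in># A" using Z by auto
      have "Y = X \<or> Y \<in># A - {#Z#}" using Y False
        by (auto simp: in_diff_count split: if_splits)
      then show ?thesis using h ZA unfolding djm_def by blast
    qed
  qed
qed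

lemma djm_mono: "djm A \<Longrightarrow> B \<subseteq># A \<Longrightarrow> djm B"
  unfolding djm_def
proof (intro ballI)
  fix X Y assume h: "\<forall>X\<in>#A. \<forall>Y\<in>#A - {#X#}. X \<inter> Y = {}" and s: "B \<subseteq># A"
    and X: "X \<in># B" and Y: "Y \<in># B - {#X#}"
  have "X \<in># A" using X s by (meson mset_subset_eqD)
  moreover have "Y \<in># A - {#X#}"
  proof -
    have "count B Y \<le> count A Y" using s by (simp add: mset_subset_eq_count)
    then show ?thesis using Y by (simp add: in_diff_count)
  qed
  ultimately show "X \<inter> Y = {}" using h by blast
qed

lemma djm_plus: "djm (A + B) \<longleftrightarrow> djm A \<and> djm B \<and> (\<forall>X\<in>#A. \<forall>Y\<in>#B. X \<inter> Y = {})"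
proof (induction B)
  case empty
  then show ?case by simp
next
  case (add Y B)
  have e: "A + add_mset Y B = add_mset Y (A + B)" by simp
  show ?case
  proof
    assume L: "djm (A + add_mset Y B)"
    then have h1: "djm (A + B)" and h2: "\<forall>Z\<in>#A + B. Y \<inter> Z = {}"
      using djm_add[of Y "A + B"] e by auto
    then have h3: "djm A" "djm B" "\<forall>X\<in>#A. \<forall>Z\<in>#B. X \<inter> Z = {}" using add.IH by auto
    have "djm (add_mset Y B)" using djm_add[of Y B] h3(2) h2 by simp
    moreover have "\<forall>X\<in>#A. \<forall>Z\<in>#add_mset Y B. X \<inter> Z = {}"
    proof (intro ballI)
      fix X Z assume X: "X \<in># A" and Z: "Z \<in># add_mset Y B"
      show "X \<inter> Z = {}"
      proof (cases "Z = Y")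
        case True
        have "Y \<inter> X = {}" using h2 X by simp
        then show ?thesis using True by blast
      next
        case False
        then show ?thesis using Z X h3(3) by simp
      qed
    qed
    ultimately show "djm A \<and> djm (add_mset Y B) \<and> (\<forall>X\<in>#A. \<forall>Z\<in>#add_mset Y B. X \<inter> Z = {})"
      using h3 by blast
  next
    assume R: "djm A \<and> djm (add_mset Y B) \<and> (\<forall>X\<in>#A. \<forall>Z\<in>#add_mset Y B. X \<inter> Z = {})"
    then have r1: "djm B" "\<forall>Z\<in>#B. Y \<inter> Z = {}" using djm_add[of Y B] by auto
    have r2: "\<forall>X\<in>#A. \<forall>Z\<in>#B. X \<inter> Z = {}" using R by simp
    have "djm (A + B)" using add.IH R r1 r2 by blast
    moreover have "\<forall>Z\<in>#A + B. Y \<inter> Z = {}"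
    proof
      fix Z assume Z: "Z \<in># A + B"
      show "Y \<inter> Z = {}"
      proof (cases "Z \<in># A")
        case True
        have "Z \<inter> Y = {}" using R True by simp
        then show ?thesis by blast
      next
        case False
        then show ?thesis using Z r1 by simp
      qed
    qed
    ultimately show "djm (A + add_mset Y B)" using e djm_add[of Y "A + B"] by simp
  qed
qed

lemma djm_sum:
  assumes "djm A" "\<forall>X\<in>#A. finite X"
  shows "(\<Sum>X\<in>#A. sum q X) = sum q (\<Union>(set_mset A))"
  using assms
proof (induction A)
  case empty
  then show ?case by simp
next
  case (add X A)
  have dA: "djm A" and dX: "\<forall>Y\<in>#A. X \<inter> Y = {}" using add.prems(1) djm_add by auto
  have fin: "finite (\<Union>(set_mset A))" using add.prems(2) by auto
  have "X \<inter> \<Union>(set_mset A) = {}" using dX by auto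
  then have "sum q (X \<union> \<Union>(set_mset A)) = sum q X + sum q (\<Union>(set_mset A))"
    using fin add.prems(2) by (simp add: sum.union_disjoint)
  then show ?case using add.IH dA add.prems(2) by simp
qed

definition lptb :: "(nat \<Rightarrow> real) \<Rightarrow> nat set list \<Rightarrow> bool" where
  "lptb p xs \<longleftrightarrow> (\<forall>X\<in>set xs. 2 \<le> card X \<longrightarrow>
      (\<forall>Y\<in>set xs. pb p X \<le> 2 * pb p Y \<and> (\<forall>j\<in>X. p j \<le> pb p Y)))"

lemma pb_insert: "finite X \<Longrightarrow> j \<notin> X \<Longrightarrow> pb p (insert j X) = p j + pb p X"
  by (simp add: pb_def)

lemma pb_nonneg: "(\<forall>x\<in>X. 0 \<le> p x) \<Longrightarrow> 0 \<le> pb p X"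
  by (simp add: pb_def sum_nonneg)

lemma pb_mem_le: "finite X \<Longrightarrow> (\<forall>x\<in>X. 0 \<le> p x) \<Longrightarrow> x \<in> X \<Longrightarrow> p x \<le> pb p X"
  unfolding pb_def by (rule member_le_sum) auto

lemma set_mset_remove: "X \<in># M \<Longrightarrow> set_mset M = insert X (set_mset (M - {#X#}))"
  by (metis insert_DiffM set_mset_add_mset_insert)

lemma lpt_assign_inv:
  assumes "lpt_assign p js bs res"
  shows "\<lbrakk>\<forall>X\<in>set bs. finite X; \<forall>j\<in>set js. 0 \<le> p j; \<forall>X\<in>set bs. \<forall>x\<in>X. 0 \<le> p x;
          sorted_wrt (\<lambda>a b. p b \<le> p a) js; \<forall>X\<in>set bs. \<forall>x\<in>X. \<forall>y\<in>set js. p y \<le> p x;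
          lptb p bs; distinct js; set js \<inter> \<Union>(set bs) = {}; djm (mset bs)\<rbrakk> \<Longrightarrow>
         length res = length bs \<and> \<Union>(set res) = \<Union>(set bs) \<union> set js \<and> djm (mset res) \<and>
         (\<forall>X\<in>set res. finite X) \<and> lptb p res"
  using assms
proof (induction rule: lpt_assign.induct)
  case (Nil bs)
  then show ?case by simp
next
  case (Cons k bs js j res)
  define X where "X = bs ! k"
  define X' where "X' = insert j X"
  define bs' where "bs' = bs[k := X']"
  have kl: "k < length bs" by fact
  have Xin: "X \<in> set bs" using kl X_def by simp
  have Xmin: "\<forall>Y\<in>set bs. pb p X \<le> pb p Y"
    using Cons.hyps(2) X_def by (auto simp: in_set_conv_nth)
  have finX: "finite X" using Xin Cons.prems(1) by blast
  have pj: "0 \<le> p j" using Cons.prems(2) by simp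
  have jnot: "j \<notin> \<Union>(set bs)" using Cons.prems(8) by auto
  have jX: "j \<notin> X" using jnot Xin by blast
  have pbX': "pb p X' = p j + pb p X" using pb_insert[OF finX jX] X'_def by simp
  have msbs': "mset bs' = add_mset X' (mset bs - {#X#})"
    using mset_update[OF kl] bs'_def X_def by simp
  have setbs: "set bs = insert X (set_mset (mset bs - {#X#}))"
    using set_mset_remove[of X "mset bs"] Xin by simp
  have setbs': "set bs' = insert X' (set_mset (mset bs - {#X#}))"
    using msbs' by (metis set_mset_add_mset_insert set_mset_mset)
  have sub: "set_mset (mset bs - {#X#}) \<subseteq> set bs"
    by (auto dest: in_diffD)
  have U: "\<Union>(set bs') = \<Union>(set bs) \<union> {j}"
    using setbs setbs' X'_def by auto
  have mono: "\<forall>Y'\<in>set bs'. \<exists>Y\<in>set bs. pb p Y \<le> pb p Y'"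
  proof
    fix Y' assume "Y' \<in> set bs'"
    then have "Y' = X' \<or> Y' \<in> set bs" using setbs' sub by blast
    then show "\<exists>Y\<in>set bs. pb p Y \<le> pb p Y'"
    proof
      assume "Y' = X'"
      then have "pb p X \<le> pb p Y'" using pbX' pj by simp
      then show ?thesis using Xin by blast
    qed auto
  qed
  have d': "djm (mset bs')"
  proof -
    have dA: "djm (add_mset X (mset bs - {#X#}))"
      using Cons.prems(9) Xin by (simp add: insert_DiffM)
    then have "djm (mset bs - {#X#})" and "\<forall>Y\<in>#mset bs - {#X#}. X \<inter> Y = {}"
      using djm_add by auto
    moreover have "\<forall>Y\<in>#mset bs - {#X#}. j \<notin> Y" using jnot sub by auto
    ultimately show ?thesis using msbs' djm_add X'_def by auto
  qed
  have sc: "\<And>Y. Y \<in> set bs' \<Longrightarrow> Y = X' \<or> Y \<in> set bs" using setbs' sub by blast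
  have fin': "\<forall>X\<in>set bs'. finite X"
  proof
    fix Y assume "Y \<in> set bs'"
    then show "finite Y" using sc[of Y] finX X'_def Cons.prems(1) by auto
  qed
  have nn': "\<forall>Y\<in>set bs'. \<forall>x\<in>Y. 0 \<le> p x"
  proof (intro ballI)
    fix Y x assume "Y \<in> set bs'" "x \<in> Y"
    then show "0 \<le> p x" using sc[of Y] X'_def Cons.prems(3) Xin pj by auto
  qed
  have so: "sorted_wrt (\<lambda>a b. p b \<le> p a) js" using Cons.prems(4) by simp
  have ge': "\<forall>Y\<in>set bs'. \<forall>x\<in>Y. \<forall>y\<in>set js. p y \<le> p x"
  proof (intro ballI)
    fix Y x y assume Y: "Y \<in> set bs'" and x: "x \<in> Y" and y: "y \<in> set js"
    have "x = j \<or> (\<exists>Z\<in>set bs. x \<in> Z)" using sc[OF Y] x X'_def Xin by auto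
    then show "p y \<le> p x"
    proof
      assume "x = j" then show ?thesis using Cons.prems(4) y by simp
    next
      assume "\<exists>Z\<in>set bs. x \<in> Z" then show ?thesis using Cons.prems(5) y by auto
    qed
  qed
  have lb': "lptb p bs'"
    unfolding lptb_def
  proof (intro ballI impI)
    fix Z Y' assume Z: "Z \<in> set bs'" and cZ: "2 \<le> card Z" and Y': "Y' \<in> set bs'"
    obtain Y where Y: "Y \<in> set bs" and YY: "pb p Y \<le> pb p Y'" using mono Y' by blast
    show "pb p Z \<le> 2 * pb p Y' \<and> (\<forall>i\<in>Z. p i \<le> pb p Y')"
    proof (cases "Z = X'")
      case False
      then have "Z \<in> set bs" using Z setbs' sub by auto
      then have "pb p Z \<le> 2 * pb p Y \<and> (\<forall>i\<in>Z. p i \<le> pb p Y)"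
        using Cons.prems(6) cZ Y unfolding lptb_def by blast
      then show ?thesis using YY by fastforce
    next
      case True
      have "card X' = Suc (card X)" using X'_def finX jX by simp
      then have "X \<noteq> {}" using cZ True by auto
      then obtain x where x: "x \<in> X" by blast
      have "p j \<le> p x" using Cons.prems(5) Xin x by simp
      also have "p x \<le> pb p X" using pb_mem_le[OF finX _ x] Cons.prems(3) Xin by blast
      finally have pjX: "p j \<le> pb p X" .
      have XY: "pb p X \<le> pb p Y" using Xmin Y by blast
      have "pb p Z \<le> 2 * pb p Y'" unfolding True using pbX' pjX XY YY by linarith
      moreover have "\<forall>i\<in>Z. p i \<le> pb p Y'"
      proof
        fix i assume "i \<in> Z"
        then have "i = j \<or> i \<in> X" using True X'_def by auto
        moreover have "\<forall>i\<in>X. p i \<le> pb p X" using pb_mem_le[OF finX] Cons.prems(3) Xin by blast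
        ultimately show "p i \<le> pb p Y'" using pjX XY YY by force
      qed
      ultimately show ?thesis by blast
    qed
  qed
  have dj: "distinct js" using Cons.prems(7) by simp
  have disj': "set js \<inter> \<Union>(set bs') = {}" using U Cons.prems(7) Cons.prems(8) by auto
  have IH: "length res = length bs' \<and> \<Union>(set res) = \<Union>(set bs') \<union> set js \<and> djm (mset res) \<and>
         (\<forall>X\<in>set res. finite X) \<and> lptb p res"
    using Cons.IH[OF _ _ _ so _ _ dj] fin' Cons.prems(2) nn' ge' lb' disj' d' bs'_def X'_def X_def
    by auto
  then show ?case using U bs'_def by auto
qed

lemma lpt_props:
  assumes "lpt p J l res" "\<forall>j\<in>J. 0 \<le> p j"
  shows "length res = l \<and> \<Union>(set res) = J \<and> djm (mset res) \<and> (\<forall>X\<in>set res. finite X) \<and> lptb p res"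
proof -
  obtain js where js: "distinct js" "set js = J" "sorted_wrt (\<lambda>a b. p b \<le> p a) js"
    "lpt_assign p js (replicate l {}) res" using assms(1) unfolding lpt_def by blast
  have d0: "djm (mset (replicate l ({}::nat set)))" by (simp add: djm_def)
  have l0: "lptb p (replicate l {})" by (simp add: lptb_def)
  have e0: "\<Union>(set (replicate l ({}::nat set))) = {}" by (induction l) auto
  have "length res = length (replicate l ({}::nat set)) \<and> \<Union>(set res) = \<Union>(set (replicate l ({}::nat set))) \<union> set js
      \<and> djm (mset res) \<and> (\<forall>X\<in>set res. finite X) \<and> lptb p res"
    using lpt_assign_inv[OF js(4)] js assms(2) d0 l0 by (simp add: e0)
  then show ?thesis using js(2) by (simp add: e0)
qed

lemma lpt_min:
  assumes lp: "lpt p J l res" and JC: "J = \<Union>(set C)" and lC: "l = length C"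
    and dC: "djm (mset C)" and fC: "\<forall>X\<in>set C. finite X" and nn: "\<forall>j\<in>J. 0 \<le> p j"
    and mC: "mset C = add_mset b D" and mub: "\<mu> \<le> pb p b" and muD: "\<forall>Y\<in>#D. 2 * \<mu> \<le> pb p Y"
    and mu0: "0 \<le> \<mu>"
  shows "\<forall>X\<in>set res. \<mu> \<le> pb p X"
proof (rule ccontr)
  assume "\<not> (\<forall>X\<in>set res. \<mu> \<le> pb p X)"
  then obtain X1 where X1: "X1 \<in> set res" "pb p X1 < \<mu>" by force
  have P: "length res = l \<and> \<Union>(set res) = J \<and> djm (mset res) \<and> (\<forall>X\<in>set res. finite X) \<and> lptb p res"
    using lpt_props[OF lp nn] .
  define F where "F = Min (pb p ` set res)"
  have fr: "finite (pb p ` set res)" by simp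
  have F_le: "\<forall>X\<in>set res. F \<le> pb p X" using F_def by simp
  obtain X0 where X0: "X0 \<in> set res" "pb p X0 = F"
  proof -
    have "F \<in> pb p ` set res" unfolding F_def using X1(1) by (intro Min_in) auto
    then show ?thesis using that by blast
  qed
  have Fmu: "F < \<mu>" using F_le X1 by force
  define q where "q j = (if p j \<le> F then p j else 2 * \<mu>)" for j
  define h where "h X = sum q X" for X
  have nnres: "\<forall>X\<in>set res. \<forall>x\<in>X. 0 \<le> p x" using P nn by blast
  have nnC: "\<forall>X\<in>set C. \<forall>x\<in>X. 0 \<le> p x" using JC nn by blast
  have q0: "\<forall>j\<in>J. 0 \<le> q j" using nn mu0 q_def by simp
  have S1: "(\<Sum>X\<in>#mset res. h X) = sum q J"
    using djm_sum[of "mset res" q] P h_def by simp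
  have S2: "(\<Sum>X\<in>#mset C. h X) = sum q J"
    using djm_sum[of "mset C" q] dC fC JC h_def by simp
  have hp: "h X = pb p X" if "\<forall>j\<in>X. p j \<le> F" for X
    unfolding h_def pb_def using that q_def by (intro sum.cong) auto
  have hres: "h X \<le> 2 * \<mu>" if X: "X \<in> set res" for X
  proof -
    have finX: "finite X" using P X by blast
    consider "2 \<le> card X" | "card X = 1" | "card X = 0" by linarith
    then show ?thesis
    proof cases
      case 1
      have "pb p X \<le> 2 * pb p X0 \<and> (\<forall>j\<in>X. p j \<le> pb p X0)"
        using P X 1 X0(1) unfolding lptb_def by blast
      then have "h X = pb p X" "pb p X \<le> 2 * F" using hp X0(2) by auto
      then show ?thesis using Fmu by linarith
    next
      case 2
      then obtain j where "X = {j}" using card_1_singletonE by blast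
      then show ?thesis using Fmu mu0 unfolding h_def q_def by auto
    next
      case 3
      then have "X = {}" using finX by simp
      then show ?thesis using mu0 h_def by simp
    qed
  qed
  have hX0: "h X0 \<le> F"
  proof -
    have "\<forall>j\<in>X0. p j \<le> pb p X0" using pb_mem_le[of X0 p] P X0(1) nnres by blast
    then show ?thesis using hp X0(2) by simp
  qed
  have hC: "min (pb p Y) (2 * \<mu>) \<le> h Y" if Y: "Y \<in> set C" for Y
  proof (cases "\<forall>j\<in>Y. p j \<le> F")
    case True
    then show ?thesis using hp by simp
  next
    case False
    then obtain j where j: "j \<in> Y" "\<not> p j \<le> F" by blast
    have fY: "finite Y" using fC Y by blast
    have "q j \<le> sum q Y" using q0 JC Y j(1) fY by (intro member_le_sum) auto
    then show ?thesis using j(2) q_def h_def by simp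
  qed
  have rr: "mset res = add_mset X0 (mset res - {#X0#})" using X0(1) by (simp add: insert_DiffM)
  have szr: "size (mset res - {#X0#}) = l - 1" using X0(1) P by (simp add: size_Diff_submset)
  have "(\<Sum>X\<in>#mset res. h X) = h X0 + (\<Sum>X\<in>#mset res - {#X0#}. h X)"
    by (subst rr) simp
  also have "(\<Sum>X\<in>#mset res - {#X0#}. h X) \<le> (\<Sum>X\<in>#mset res - {#X0#}. 2 * \<mu>)"
    by (rule sum_mset_mono) (use hres in \<open>auto dest: in_diffD\<close>)
  finally have new: "(\<Sum>X\<in>#mset res. h X) \<le> F + real (l - 1) * (2 * \<mu>)"
    using hX0 szr sum_mset_constant by (simp)
  have szD: "size D = l - 1" using lC mC by (metis size_add_mset size_mset diff_Suc_1)
  have "(\<Sum>X\<in>#mset C. h X) = h b + (\<Sum>X\<in>#D. h X)" using mC by simp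
  moreover have "(\<Sum>X\<in>#D. 2 * \<mu>) \<le> (\<Sum>X\<in>#D. h X)"
  proof (rule sum_mset_mono)
    fix Y assume Y: "Y \<in># D"
    then have "Y \<in># mset C" using mC by simp
    then have "Y \<in> set C" by simp
    then have "min (pb p Y) (2 * \<mu>) \<le> h Y" using hC by blast
    then show "2 * \<mu> \<le> h Y" using muD Y by simp
  qed
  moreover have "\<mu> \<le> h b"
  proof -
    have "b \<in># mset C" using mC by simp
    then have "b \<in> set C" by simp
    then have "min (pb p b) (2 * \<mu>) \<le> h b" using hC by blast
    then show ?thesis using mub mu0 by simp
  qed
  ultimately have old: "\<mu> + real (l - 1) * (2 * \<mu>) \<le> (\<Sum>X\<in>#mset C. h X)"
    using szD sum_mset_constant by simp
  show False using new old S1 S2 Fmu by linarith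
qed

definition AB :: "nat \<Rightarrow> (nat \<Rightarrow> nat set list) \<Rightarrow> nat set multiset" where
  "AB m M = (\<Sum>i<m. mset (M i))"

lemma mset_all_bags: "mset (all_bags m M) = AB m M"
proof -
  have "mset (all_bags m M) = sum_list (map (\<lambda>i. mset (M i)) [0..<m])"
    unfolding all_bags_def mset_concat by (simp add: comp_def)
  also have "\<dots> = (\<Sum>i\<in>set [0..<m]. mset (M i))"
    by (rule interv_sum_list_conv_sum_set_nat)
  finally show ?thesis unfolding AB_def by (simp add: atLeast0LessThan)
qed

lemma set_all_bags: "set (all_bags m M) = set_mset (AB m M)"
  by (metis mset_all_bags set_mset_mset)

lemma AB_mem: "i < m \<Longrightarrow> mset (M i) \<subseteq># AB m M"
proof -
  assume i: "i < m"
  have "AB m M = mset (M i) + (\<Sum>j\<in>{..<m} - {i}. mset (M j))"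
    unfolding AB_def using i by (simp add: sum.remove)
  then show ?thesis by simp
qed

lemma AB_split:
  assumes "i1 < m" "i2 < m" "i1 \<noteq> i2"
  shows "AB m M = (\<Sum>j\<in>{..<m} - {i1, i2}. mset (M j)) + mset (M i1) + mset (M i2)"
proof -
  have "AB m M = (\<Sum>j\<in>{..<m} - {i1, i2}. mset (M j)) + (\<Sum>j\<in>{i1, i2}. mset (M j))"
    unfolding AB_def using assms by (intro sum.subset_diff) auto
  then show ?thesis using assms(3) by (simp add: add.assoc)
qed

definition bal :: "(nat \<Rightarrow> real) \<Rightarrow> nat set list \<Rightarrow> bool" where
  "bal p xs \<longleftrightarrow> (\<exists>F. \<forall>X\<in>set xs. F \<le> pb p X \<and> (2 \<le> card X \<longrightarrow> pb p X \<le> 2 * F))"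

lemma bal_mono: "bal p xs \<Longrightarrow> set ys \<subseteq> set xs \<Longrightarrow> bal p ys"
  unfolding bal_def by blast

lemma lptb_bal: "lptb p xs \<Longrightarrow> bal p xs"
proof (cases "xs = []")
  case True
  then show ?thesis by (simp add: bal_def)
next
  case False
  assume l: "lptb p xs"
  define F where "F = Min (pb p ` set xs)"
  have "F \<in> pb p ` set xs" unfolding F_def using False by (intro Min_in) auto
  then obtain Y where Y: "Y \<in> set xs" "pb p Y = F" by blast
  have "\<forall>X\<in>set xs. F \<le> pb p X \<and> (2 \<le> card X \<longrightarrow> pb p X \<le> 2 * F)"
  proof
    fix X assume X: "X \<in> set xs"
    have "F \<le> pb p X" unfolding F_def using X by simp
    moreover have "2 \<le> card X \<longrightarrow> pb p X \<le> 2 * F" using l X Y unfolding lptb_def by metis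
    ultimately show "F \<le> pb p X \<and> (2 \<le> card X \<longrightarrow> pb p X \<le> 2 * F)" by blast
  qed
  then show ?thesis unfolding bal_def by blast
qed

definition mu :: "(nat \<Rightarrow> real) \<Rightarrow> nat \<Rightarrow> (nat \<Rightarrow> nat set list) \<Rightarrow> real" where
  "mu p m M = Min (pb p ` set_mset (AB m M))"

definition dead :: "(nat \<Rightarrow> real) \<Rightarrow> nat \<Rightarrow> (nat \<Rightarrow> nat set list) \<Rightarrow> nat \<Rightarrow> bool" where
  "dead p m M i \<longleftrightarrow> (\<forall>X\<in>set (M i). 2 \<le> card X \<longrightarrow> pb p X \<le> 4 * mu p m M)"

definition Phi :: "(nat \<Rightarrow> real) \<Rightarrow> nat \<Rightarrow> (nat \<Rightarrow> nat set list) \<Rightarrow> nat" where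
  "Phi p m M = (\<Sum>i<m. if dead p m M i then length (M i) else m)"

definition Inv :: "nat \<Rightarrow> (nat \<Rightarrow> real) \<Rightarrow> nat \<Rightarrow> (nat \<Rightarrow> nat set list) \<Rightarrow> bool" where
  "Inv n p m M \<longleftrightarrow> size (AB m M) = m \<and> (\<forall>X\<in>#AB m M. X \<subseteq> {..<n}) \<and> djm (AB m M) \<and>
     (\<forall>i<m. bal p (M i))"

lemma step:
  assumes I: "Inv n p m M" and pn: "\<forall>j<n. 0 \<le> p j"
    and lc: "loop_cond 4 p m M" and rb: "lpt_rebalance p m M M'"
  shows "Inv n p m M' \<and> Phi p m M' < Phi p m M"
proof -
  define A where "A = AB m M"
  have Asz: "size A = m" and Asub: "\<forall>X\<in>#A. X \<subseteq> {..<n}" and Adj: "djm A"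
    and Abal: "\<forall>i<m. bal p (M i)" using I unfolding Inv_def A_def by auto
  have Ann: "\<forall>X\<in>#A. 0 \<le> pb p X"
  proof
    fix X assume "X \<in># A"
    then have "X \<subseteq> {..<n}" using Asub by blast
    then show "0 \<le> pb p X" using pn by (intro pb_nonneg) auto
  qed
  obtain imin a imax res Bx where
    imin: "imin < m" and al: "a < length (M imin)" and
    minb: "\<forall>B\<in>set (all_bags m M). pb p (M imin ! a) \<le> pb p B" and
    imax: "imax < m" and Bx: "Bx \<in> set (M imax)" "2 \<le> card Bx" and
    maxB: "\<forall>B\<in>set (all_bags m M). 2 \<le> card B \<longrightarrow> pb p B \<le> pb p Bx" and
    lp: "lpt p (\<Union>(set ((M(imin := take a (M imin) @ drop (Suc a) (M imin))) imax @ [M imin ! a])))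
           (length ((M(imin := take a (M imin) @ drop (Suc a) (M imin))) imax @ [M imin ! a])) res" and
    M': "M' = (M(imin := take a (M imin) @ drop (Suc a) (M imin)))(imax := res)"
    using rb unfolding lpt_rebalance_def Let_def by blast
  define b where "b = M imin ! a"
  define del where "del = take a (M imin) @ drop (Suc a) (M imin)"
  define \<mu> where "\<mu> = mu p m M"
  have bM: "b \<in> set (M imin)" using al b_def by simp
  have "b \<in># mset (M imin)" using bM by simp
  then have bA: "b \<in># A" using AB_mem[OF imin, of M] A_def by (simp add: mset_subset_eqD)
  have minA: "\<forall>X\<in>#A. pb p b \<le> pb p X" using minb b_def set_all_bags A_def by metis
  have finA: "finite (pb p ` set_mset A)" by simp
  have mub: "\<mu> = pb p b"
    unfolding \<mu>_def mu_def A_def[symmetric] using finA bA minA by (intro Min_eqI) auto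
  have mu0: "0 \<le> \<mu>" using mub Ann bA by simp
  have muA: "\<forall>X\<in>#A. \<mu> \<le> pb p X" using mub minA by simp
  obtain B0 where B0: "B0 \<in># A" "2 \<le> card B0" "4 * Min (pb p ` set (all_bags m M)) < pb p B0"
    using lc unfolding loop_cond_def set_all_bags A_def by blast
  have "Min (pb p ` set (all_bags m M)) = \<mu>" unfolding \<mu>_def mu_def set_all_bags by simp
  then have B0mu: "4 * \<mu> < pb p B0" using B0 by simp
  have "pb p B0 \<le> pb p Bx" using maxB B0 set_all_bags A_def by metis
  then have Bxmu: "4 * \<mu> < pb p Bx" using B0mu by simp
  obtain Fx where Fx: "\<forall>X\<in>set (M imax). Fx \<le> pb p X \<and> (2 \<le> card X \<longrightarrow> pb p X \<le> 2 * Fx)"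
    using Abal imax unfolding bal_def by blast
  have Fxmu: "2 * \<mu> < Fx" using Fx Bx Bxmu by fastforce
  have neq: "imin \<noteq> imax"
  proof
    assume "imin = imax"
    then have "Fx \<le> pb p b" using Fx bM by blast
    then show False using Fxmu mub mu0 by linarith
  qed
  define C where "C = M imax @ [b]"
  have lp2: "lpt p (\<Union>(set C)) (length C) res"
    using lp neq unfolding C_def b_def by simp
  have M'imax: "M' imax = res" using M' by simp
  have M'imin: "M' imin = del" using M' neq del_def by simp
  have M'oth: "M' i = M i" if "i \<noteq> imin" "i \<noteq> imax" for i using M' that by simp
  define R where "R = (\<Sum>j\<in>{..<m} - {imin, imax}. mset (M j))"
  have Asplit: "A = R + mset (M imin) + mset (M imax)"
    using AB_split[OF imin imax neq, of M] unfolding A_def R_def .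
  have eqM: "M imin = take a (M imin) @ b # drop (Suc a) (M imin)"
    using id_take_nth_drop[OF al] b_def by simp
  have mdel: "mset (M imin) = add_mset b (mset del)"
    using arg_cong[OF eqM, of mset] unfolding del_def by simp
  have mC: "mset C = add_mset b (mset (M imax))" unfolding C_def by simp
  have A2: "A = (R + mset del) + mset C" using Asplit mdel mC by simp
  have R' : "(\<Sum>j\<in>{..<m} - {imin, imax}. mset (M' j)) = R"
    unfolding R_def using M'oth by (intro sum.cong) auto
  have A'eq: "AB m M' = (R + mset del) + mset res"
    using AB_split[OF imin imax neq, of M'] R' M'imin M'imax by simp
  have dRd: "djm (R + mset del)" and dC: "djm (mset C)"
    and cross: "\<forall>X\<in>#R + mset del. \<forall>Y\<in>#mset C. X \<inter> Y = {}"
    using Adj A2 djm_plus by auto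
  have Csub: "\<forall>X\<in>set C. X \<subseteq> {..<n}" using Asub A2 by auto
  have fC: "\<forall>X\<in>set C. finite X" using Csub finite_subset by blast
  have nnJ: "\<forall>j\<in>\<Union>(set C). 0 \<le> p j" using Csub pn by blast
  have P: "length res = length C \<and> \<Union>(set res) = \<Union>(set C) \<and> djm (mset res) \<and>
      (\<forall>X\<in>set res. finite X) \<and> lptb p res"
    using lpt_props[OF lp2 nnJ] .
  have D2: "\<forall>Y\<in>#mset (M imax). 2 * \<mu> \<le> pb p Y" using Fx Fxmu by fastforce
  have resmu: "\<forall>X\<in>set res. \<mu> \<le> pb p X"
    using lpt_min[OF lp2 refl refl dC fC nnJ mC _ D2 mu0] mub by simp
  have sz': "size (AB m M') = m"
  proof -
    have "size A = size R + size (mset del) + size (mset C)" using A2 by simp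
    then show ?thesis using A'eq P Asz by simp
  qed
  have sub': "\<forall>X\<in>#AB m M'. X \<subseteq> {..<n}"
  proof
    fix X assume "X \<in># AB m M'"
    then have "X \<in># R + mset del \<or> X \<in> set res" using A'eq by auto
    then show "X \<subseteq> {..<n}"
    proof
      assume "X \<in># R + mset del" then show ?thesis using Asub A2 by auto
    next
      assume "X \<in> set res" then show ?thesis using P Csub by blast
    qed
  qed
  have dj': "djm (AB m M')"
  proof -
    have "\<forall>X\<in>#R + mset del. \<forall>Y\<in>#mset res. X \<inter> Y = {}"
    proof (intro ballI)
      fix X Y assume X: "X \<in># R + mset del" and Y: "Y \<in># mset res"
      have "Y \<subseteq> \<Union>(set C)" using Y P by auto
      moreover have "X \<inter> \<Union>(set C) = {}" using cross X by auto
      ultimately show "X \<inter> Y = {}" by blast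
    qed
    then show ?thesis using A'eq djm_plus dRd P by simp
  qed
  have sdel: "set del \<subseteq> set (M imin)" using mdel by (metis set_mset_mset set_mset_add_mset_insert subset_insertI)
  have bal': "\<forall>i<m. bal p (M' i)"
  proof (intro allI impI)
    fix i assume i: "i < m"
    show "bal p (M' i)"
    proof (cases "i = imax")
      case True then show ?thesis using M'imax P lptb_bal by simp
    next
      case False
      show ?thesis
      proof (cases "i = imin")
        case True then show ?thesis using M'imin sdel bal_mono Abal imin by metis
      next
        case False2: False
        then show ?thesis using M'oth False Abal i by simp
      qed
    qed
  qed
  have Inv': "Inv n p m M'" unfolding Inv_def using sz' sub' dj' bal' by blast
  define \<mu>' where "\<mu>' = mu p m M'"
  have mumono: "\<mu> \<le> \<mu>'"
  proof -
    have "A \<noteq> {#}" using bA by auto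
    then have "size A \<noteq> 0" by simp
    then have "AB m M' \<noteq> {#}" using sz' Asz by auto
    then have ne: "set_mset (AB m M') \<noteq> {}" by simp
    have "\<forall>X\<in>#AB m M'. \<mu> \<le> pb p X"
    proof
      fix X assume "X \<in># AB m M'"
      then have "X \<in># R + mset del \<or> X \<in> set res" using A'eq by auto
      then show "\<mu> \<le> pb p X"
      proof
        assume "X \<in># R + mset del" then show ?thesis using muA A2 by auto
      next
        assume "X \<in> set res" then show ?thesis using resmu by blast
      qed
    qed
    then show ?thesis unfolding \<mu>'_def mu_def using ne by (subst Min_ge_iff) auto
  qed
  have lenle: "length (M' i) \<le> m" if "i < m" for i
    using AB_mem[OF that, of M'] sz' by (metis size_mset size_mset_mono)
  have lenle0: "length (M i) \<le> m" if "i < m" for i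
    using AB_mem[OF that, of M] Asz A_def by (metis size_mset size_mset_mono)
  define f where "f i = (if dead p m M i then length (M i) else m)" for i
  define g where "g i = (if dead p m M' i then length (M' i) else m)" for i
  have lt: "g imin < f imin"
  proof -
    obtain Fm where Fm: "\<forall>X\<in>set (M imin). Fm \<le> pb p X \<and> (2 \<le> card X \<longrightarrow> pb p X \<le> 2 * Fm)"
      using Abal imin unfolding bal_def by blast
    have "Fm \<le> \<mu>" using Fm bM mub by blast
    then have "dead p m M' imin"
      unfolding dead_def \<mu>'_def[symmetric] using M'imin sdel Fm mu0 mumono
      by (smt (verit) subsetD)
    then have "g imin = length del" unfolding g_def using M'imin by simp
    moreover have "length del < length (M imin)" using arg_cong[OF mdel, of size] by simp
    moreover have "length (M imin) \<le> f imin" unfolding f_def using lenle0[OF imin] by simp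
    ultimately show ?thesis by simp
  qed
  have le: "\<forall>i\<in>{..<m}. g i \<le> f i"
  proof
    fix i assume "i \<in> {..<m}"
    then have i: "i < m" by simp
    show "g i \<le> f i"
    proof (cases "dead p m M i")
      case False
      then show ?thesis unfolding f_def g_def using lenle[OF i] by simp
    next
      case dM: True
      then have "i \<noteq> imax" using Bx Bxmu unfolding dead_def \<mu>_def by force
      show ?thesis
      proof (cases "i = imin")
        case True
        then show ?thesis using lt by simp
      next
        case False
        then have "M' i = M i" using M'oth \<open>i \<noteq> imax\<close> by simp
        moreover have "dead p m M' i"
          using dM mumono mu0 \<open>M' i = M i\<close> unfolding dead_def \<mu>_def[symmetric] \<mu>'_def[symmetric]
          by force
        ultimately show ?thesis unfolding g_def f_def using dM by simp
      qed
    qed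
  qed
  have "sum g {..<m} < sum f {..<m}"
    using le lt imin by (intro sum_strict_mono_ex1) auto
  then have "Phi p m M' < Phi p m M" unfolding Phi_def f_def g_def .
  then show ?thesis using Inv' by blast
qed

lemma djm_init:
  fixes m m' :: nat and B :: "nat \<Rightarrow> nat set"
  assumes "\<forall>i<m. \<forall>i'<m. i \<noteq> i' \<longrightarrow> B i \<inter> B i' = {}"
  shows "m' \<le> m \<Longrightarrow> djm (\<Sum>i<m'. {#B i#})"
proof (induction m')
  case 0
  then show ?case by simp
next
  case (Suc m')
  have e: "(\<Sum>i<Suc m'. {#B i#}) = add_mset (B m') (\<Sum>i<m'. {#B i#})" by (simp add: add.commute)
  have "\<forall>Y\<in>#(\<Sum>i<m'. {#B i#}). B m' \<inter> Y = {}"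
  proof
    fix Y assume "Y \<in># (\<Sum>i<m'. {#B i#})"
    then obtain i where "i < m'" "Y = B i" by (auto simp: set_mset_sum)
    then show "B m' \<inter> Y = {}" using assms Suc.prems by auto
  qed
  then show ?case using e djm_add Suc by simp
qed

lemma Inv_init:
  assumes "ipr_partition n p m s eps B" "\<forall>j<n. 0 \<le> p j"
  shows "Inv n p m (\<lambda>i. [B i])"
proof -
  have P: "\<forall>i<m. \<forall>i'<m. i \<noteq> i' \<longrightarrow> B i \<inter> B i' = {}" "(\<Union>i<m. B i) = {..<n}"
    using assms(1) unfolding ipr_partition_def by auto
  have ABe: "AB m (\<lambda>i. [B i]) = (\<Sum>i<m. {#B i#})" unfolding AB_def by simp
  have sz: "size (AB m (\<lambda>i. [B i])) = m" unfolding ABe by (simp add: size_multiset_sum)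
  have sub: "\<forall>X\<in>#AB m (\<lambda>i. [B i]). X \<subseteq> {..<n}"
  proof
    fix X assume "X \<in># AB m (\<lambda>i. [B i])"
    then obtain i where "i < m" "X = B i" unfolding ABe by (auto simp: set_mset_sum)
    then show "X \<subseteq> {..<n}" using P(2) by blast
  qed
  have dj: "djm (AB m (\<lambda>i. [B i]))" unfolding ABe using djm_init[OF P(1)] by simp
  have bl: "\<forall>i<m. bal p [B i]"
  proof (intro allI impI)
    fix i assume i: "i < m"
    have "B i \<subseteq> {..<n}" using P(2) i by blast
    then have "0 \<le> pb p (B i)" using assms(2) by (intro pb_nonneg) auto
    then show "bal p [B i]" unfolding bal_def by (intro exI[of _ "pb p (B i)"]) auto
  qed
  show ?thesis unfolding Inv_def using sz sub dj bl by simp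
qed

theorem lemma9:
  shows "\<exists>C::nat. \<forall>n m (p::nat \<Rightarrow> real) (s::nat \<Rightarrow> real) (alpha::real) (eps::real)
            (B::nat \<Rightarrow> nat set) (k::nat).
     1 \<le> m \<longrightarrow>
     (\<forall>j<n. 0 \<le> p j) \<longrightarrow>
     (\<forall>i<m. 0 < s i) \<longrightarrow>
     (\<forall>i i'. i \<le> i' \<and> i' < m \<longrightarrow> s i' \<le> s i) \<longrightarrow>
     0 < alpha \<and> alpha < 1 \<longrightarrow>
     0 < eps \<and> eps < 1 \<longrightarrow>
     ipr_partition n p m s eps B \<longrightarrow>
     ipr_runs_iterations 4 alpha p s m B k \<longrightarrow>
     k \<le> C * m^2"
proof (intro exI[of _ 1] allI impI)
  fix n m :: nat and p s :: "nat \<Rightarrow> real" and alpha eps :: real and B :: "nat \<Rightarrow> nat set" and k :: nat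
  assume m1: "1 \<le> m" and pn: "\<forall>j<n. 0 \<le> p j" and part: "ipr_partition n p m s eps B"
    and runs: "ipr_runs_iterations 4 alpha p s m B k"
  obtain M :: "nat \<Rightarrow> nat \<Rightarrow> nat set list" where M0: "M 0 = (\<lambda>i. [B i])"
    and run: "\<forall>t<k. loop_cond 4 p m (M t) \<and> lpt_rebalance p m (M t) (M (Suc t))"
    using runs unfolding ipr_runs_iterations_def by blast
  have I0: "Inv n p m (M 0)" using Inv_init[OF part pn] M0 by simp
  have main: "t \<le> k \<Longrightarrow> Inv n p m (M t) \<and> Phi p m (M t) + t \<le> Phi p m (M 0)" for t
  proof (induction t)
    case 0
    then show ?case using I0 by simp
  next
    case (Suc t)
    then have IH: "Inv n p m (M t) \<and> Phi p m (M t) + t \<le> Phi p m (M 0)" by simp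
    have "t < k" using Suc.prems by simp
    then have "Inv n p m (M (Suc t)) \<and> Phi p m (M (Suc t)) < Phi p m (M t)"
      using step[of n p m "M t" "M (Suc t)"] IH pn run by blast
    then show ?case using IH by simp
  qed
  have "Phi p m (M 0) \<le> (\<Sum>i<m. m)"
    unfolding Phi_def M0 using m1 by (intro sum_mono) auto
  then have "Phi p m (M 0) \<le> m * m" by simp
  then have "k \<le> m * m" using main[of k] by simp
  then show "k \<le> 1 * m^2" by (simp add: power2_eq_square)
qed

end
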